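(* Let $\varepsilon\in(0,\frac12)$ and $d\ge1$, and let $G$ be a graph with $|G|\ge \varepsilon^{-10d^2}$. Let $x:=\varepsilon^{5d}$. Assume that for every induced subgraph $F$ of $G$ with $|F|\ge \varepsilon^{d}|G|$, there exists $k\in[2,1/x]$ such that there is a pure or $x$-sparse $(k,|F|/k^d)$-blockade in $F$. Then there is an $(\varepsilon^{-1},{x^{2d}|G|})$-blockade $(B_1,\ldots,B_{\ell})$ in $G$, such that for all distinct $i,j\in[\ell]$, $(B_i,B_j)$ is either complete or weakly $\varepsilon^d$-sparse in $G$.
   Context: Graphs are finite and simple; $|G|$ is the number of vertices of $G$. A blockade in $G$ is a sequence $(B_1,\ldots,B_m)$ of disjoint subsets of $V(G)$, with length $m$ and width $\min_i|B_i|$; a $(k,w)$-blockade has length at least $k$ and width at least $w$. A pair $(A,B)$ of disjoint sets is complete if all edges between them are present, anticomplete if none are; a blockade is pure if every pair of its blocks is complete or anticomplete. For disjoint $A,B$, $B$ is $x$-sparse to $A$ if every vertex of $B$ has at most $x|A|$ neighbours in $A$; a blockade $(B_1,\ldots,B_m)$ is $x$-sparse if $B_j$ is $x$-sparse to $B_i$ for all $i<j$. $(A,B)$ is weakly $x$-sparse if the number of edges between $A$ and $B$ is at most $x|A||B|$. *)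

theory Defs
  imports Complex_Main
begin

text \<open>Induced subgraphs are given by vertex subsets S of V
  (with the edges of E between vertices of S).\<close>
definition simple_graph :: "'a set \<Rightarrow> ('a \<Rightarrow> 'a \<Rightarrow> bool) \<Rightarrow> bool" where
  "simple_graph V E \<longleftrightarrow> finite V \<and> (\<forall>u v. E u v \<longrightarrow> u \<in> V \<and> v \<in> V)
     \<and> (\<forall>u v. E u v \<longrightarrow> E v u) \<and> (\<forall>v. \<not> E v v)"

definition blockade :: "'a set \<Rightarrow> (nat \<Rightarrow> 'a set) \<Rightarrow> nat \<Rightarrow> bool" where
  "blockade S B m \<longleftrightarrow> (\<forall>i<m. B i \<subseteq> S) \<and> (\<forall>i<m. \<forall>j<m. i \<noteq> j \<longrightarrow> B i \<inter> B j = {})"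

definition has_width_at_least :: "(nat \<Rightarrow> 'a set) \<Rightarrow> nat \<Rightarrow> real \<Rightarrow> bool" where
  "has_width_at_least B m w \<longleftrightarrow> (\<forall>i<m. real (card (B i)) \<ge> w)"

definition complete_pair :: "('a \<Rightarrow> 'a \<Rightarrow> bool) \<Rightarrow> 'a set \<Rightarrow> 'a set \<Rightarrow> bool" where
  "complete_pair E A B \<longleftrightarrow> (\<forall>a\<in>A. \<forall>b\<in>B. E a b)"

definition anticomplete_pair :: "('a \<Rightarrow> 'a \<Rightarrow> bool) \<Rightarrow> 'a set \<Rightarrow> 'a set \<Rightarrow> bool" where
  "anticomplete_pair E A B \<longleftrightarrow> (\<forall>a\<in>A. \<forall>b\<in>B. \<not> E a b)"

definition pure_blockade :: "('a \<Rightarrow> 'a \<Rightarrow> bool) \<Rightarrow> (nat \<Rightarrow> 'a set) \<Rightarrow> nat \<Rightarrow> bool" where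
  "pure_blockade E B m \<longleftrightarrow>
     (\<forall>i<m. \<forall>j<m. i \<noteq> j \<longrightarrow> complete_pair E (B i) (B j) \<or> anticomplete_pair E (B i) (B j))"

definition sparse_to :: "('a \<Rightarrow> 'a \<Rightarrow> bool) \<Rightarrow> real \<Rightarrow> 'a set \<Rightarrow> 'a set \<Rightarrow> bool" where
  "sparse_to E x A B \<longleftrightarrow> (\<forall>v\<in>B. real (card {u\<in>A. E v u}) \<le> x * real (card A))"

definition sparse_blockade :: "('a \<Rightarrow> 'a \<Rightarrow> bool) \<Rightarrow> real \<Rightarrow> (nat \<Rightarrow> 'a set) \<Rightarrow> nat \<Rightarrow> bool" where
  "sparse_blockade E x B m \<longleftrightarrow> (\<forall>i j. i < j \<and> j < m \<longrightarrow> sparse_to E x (B i) (B j))"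

definition weakly_sparse :: "('a \<Rightarrow> 'a \<Rightarrow> bool) \<Rightarrow> real \<Rightarrow> 'a set \<Rightarrow> 'a set \<Rightarrow> bool" where
  "weakly_sparse E x A B \<longleftrightarrow>
     real (card {(a, b). a \<in> A \<and> b \<in> B \<and> E a b}) \<le> x * real (card A) * real (card B)"

end

theory Submission
  imports Defs
begin

lemma card_pairs_Sigma:
  assumes "finite A" "finite B"
  shows "card {(a, b). a \<in> A \<and> b \<in> B \<and> P a b} = (\<Sum>a\<in>A. card {b\<in>B. P a b})"
proof -
  have "{(a, b). a \<in> A \<and> b \<in> B \<and> P a b} = Sigma A (\<lambda>a. {b\<in>B. P a b})" by auto
  thus ?thesis using assms by simp
qed

lemma card_pairs_swap:
  "card {(a, b). a \<in> A \<and> b \<in> B \<and> P a b} = card {(b, a). b \<in> B \<and> a \<in> A \<and> P a b}"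
proof -
  have "{(b, a). b \<in> B \<and> a \<in> A \<and> P a b} = prod.swap ` {(a, b). a \<in> A \<and> b \<in> B \<and> P a b}"
    by auto
  thus ?thesis by (simp add: card_image)
qed

lemma sparse_sub:
  assumes sp: "sparse_to E x A B" and CA: "C \<subseteq> A" and DB: "D \<subseteq> B"
    and fA: "finite A" and fB: "finite B"
    and sym: "\<forall>u v. E u v \<longrightarrow> E v u" and ineq: "x * real (card A) \<le> y * real (card C)"
  shows "weakly_sparse E y C D \<and> weakly_sparse E y D C"
proof -
  have fC: "finite C" using CA fA finite_subset by auto
  have fD: "finite D" using DB fB finite_subset by auto
  have nb: "real (card {u\<in>C. E v u}) \<le> y * real (card C)" if "v \<in> D" for v
  proof -
    have "card {u\<in>C. E v u} \<le> card {u\<in>A. E v u}"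
      by (rule card_mono) (use fA CA in auto)
    moreover have "real (card {u\<in>A. E v u}) \<le> x * real (card A)"
      using sp that DB unfolding sparse_to_def by auto
    ultimately show ?thesis using ineq by linarith
  qed
  have 1: "real (card {(a, b). a \<in> D \<and> b \<in> C \<and> E a b}) \<le> y * real (card D) * real (card C)"
  proof -
    have "real (card {(a, b). a \<in> D \<and> b \<in> C \<and> E a b}) = (\<Sum>a\<in>D. real (card {b\<in>C. E a b}))"
      using card_pairs_Sigma[OF fD fC, of E] by simp
    also have "\<dots> \<le> (\<Sum>a\<in>D. y * real (card C))"
      by (rule sum_mono) (use nb in auto)
    also have "\<dots> = y * real (card D) * real (card C)" by simp
    finally show ?thesis .
  qed
  have "{(b, a). b \<in> D \<and> a \<in> C \<and> E a b} = {(a, b). a \<in> D \<and> b \<in> C \<and> E a b}"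
    using sym by blast
  hence 2: "card {(a, b). a \<in> C \<and> b \<in> D \<and> E a b} = card {(a, b). a \<in> D \<and> b \<in> C \<and> E a b}"
    using card_pairs_swap[of C D E] by simp
  show ?thesis unfolding weakly_sparse_def using 1 2 by (simp add: mult_ac)
qed

lemma anti_ws:
  assumes "anticomplete_pair E C D" "0 \<le> y"
  shows "weakly_sparse E y C D"
proof -
  have e: "{(a, b). a \<in> C \<and> b \<in> D \<and> E a b} = {}" using assms(1) unfolding anticomplete_pair_def by auto
  show ?thesis unfolding weakly_sparse_def e using assms(2) by simp
qed

lemma complete_sub:
  assumes "complete_pair E A B" "C \<subseteq> A" "D \<subseteq> B"
  shows "complete_pair E C D"
  using assms unfolding complete_pair_def by blast

lemma anticomplete_sub:
  assumes "anticomplete_pair E A B" "C \<subseteq> A" "D \<subseteq> B"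
  shows "anticomplete_pair E C D"
  using assms unfolding anticomplete_pair_def by blast

definition good :: "('a \<Rightarrow> 'a \<Rightarrow> bool) \<Rightarrow> real \<Rightarrow> 'a set set \<Rightarrow> bool" where
  "good E y CC \<longleftrightarrow> (\<forall>C\<in>CC. \<forall>D\<in>CC. C \<noteq> D \<longrightarrow> complete_pair E C D \<or> weakly_sparse E y C D)"


lemma tree:
  fixes V :: "'a set" and E :: "'a \<Rightarrow> 'a \<Rightarrow> bool" and e d :: real
  assumes G: "simple_graph V E" and e0: "0 < e" and e1: "e < 1/2" and d1: "d \<ge> 1"
    and V0: "card V > 0"
    and H: "\<forall>S. S \<subseteq> V \<and> real (card S) \<ge> e powr d * real (card V) \<longrightarrow>
           (\<exists>k::nat. 2 \<le> k \<and> real k < 1 / e \<and>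
              (\<exists>B m. k \<le> m \<and> blockade S B m
                 \<and> has_width_at_least B m (real (card S) / (real k powr d))
                 \<and> (pure_blockade E B m \<or> sparse_blockade E (e powr (5 * d)) B m)))"
  shows "F \<subseteq> V \<Longrightarrow> e < N \<Longrightarrow> N \<le> 1/e \<Longrightarrow> real (card F) \<ge> (e*N) powr d * real (card V) \<Longrightarrow>
    \<exists>CC. finite CC \<and> (\<forall>C\<in>CC. C \<subseteq> F \<and> C \<noteq> {} \<and> real (card C) \<ge> real (card F) * (e/N) powr d)
      \<and> (\<forall>C\<in>CC. \<forall>D\<in>CC. C \<noteq> D \<longrightarrow> C \<inter> D = {}) \<and> real (card CC) \<ge> N \<and> good E (e powr d) CC"
proof (induction "card F" arbitrary: F N rule: less_induct)
  case less
  have finV: "finite V" and sym: "\<forall>u v. E u v \<longrightarrow> E v u" using G unfolding simple_graph_def by auto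
  have finF: "finite F" using less.prems(1) finV finite_subset by auto
  have N0: "N > 0" using less.prems(2) e0 by linarith
  have Fpos: "real (card F) > 0"
  proof -
    have "(e*N) powr d > 0" using e0 N0 by simp
    thus ?thesis using less.prems(4) V0 by (smt (verit) mult_pos_pos of_nat_0_less_iff)
  qed
  show ?case
  proof (cases "N \<le> 1")
    case True
    have "(e/N) powr d \<le> 1" using e0 N0 less.prems(2) d1 by (intro powr_le1) auto
    hence "real (card F) * (e/N) powr d \<le> real (card F)" using Fpos
      by (simp add: mult_le_cancel_left1)
    moreover have "F \<noteq> {}" using Fpos by auto
    ultimately show ?thesis using True finF
      by (intro exI[of _ "{F}"]) (auto simp: good_def)
  next
    case False
    have "e powr d \<le> (e*N) powr d" using e0 False d1 by (intro powr_mono2) auto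
    hence "real (card F) \<ge> e powr d * real (card V)" using less.prems(4)
      by (smt (verit) mult_right_mono of_nat_0_le_iff)
    then obtain k :: nat and B m where k2: "2 \<le> k" and ke: "real k < 1/e" and km: "k \<le> m"
      and bl: "blockade F B m" and wd: "has_width_at_least B m (real (card F) / (real k powr d))"
      and ps: "pure_blockade E B m \<or> sparse_blockade E (e powr (5 * d)) B m"
      using H less.prems(1) by blast
    have kpos: "real k > 0" using k2 by simp
    have kdpos: "real k powr d > 0" using kpos by simp
    have BF: "B i \<subseteq> F" if "i < k" for i using bl that km unfolding blockade_def by auto
    have Bdisj: "B i \<inter> B j = {}" if "i < k" "j < k" "i \<noteq> j" for i j
      using bl that km unfolding blockade_def by auto
    have Bcard: "real (card (B i)) \<ge> real (card F) / real k powr d" if "i < k" for i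
      using wd that km unfolding has_width_at_least_def by auto
    have Bne: "B i \<noteq> {}" if "i < k" for i
    proof -
      have "real (card F) / real k powr d > 0" using Fpos kdpos by simp
      thus ?thesis using Bcard[OF that] by auto
    qed
    have Bless: "card (B i) < card F" if "i < k" for i
    proof -
      define j where "j = (if i = 0 then 1 else 0::nat)"
      have j: "j < k" "j \<noteq> i" using k2 unfolding j_def by auto
      have "B i \<subset> F"
      proof -
        obtain v where "v \<in> B j" using Bne[OF j(1)] by auto
        hence "v \<in> F" "v \<notin> B i" using BF[OF j(1)] Bdisj[OF that j(1)] j(2) by auto
        thus ?thesis using BF[OF that] by auto
      qed
      thus ?thesis using finF psubset_card_mono by auto
    qed
    have Nk1: "e < N / real k"
    proof -
      have "real k * e < 1" using ke e0 by (simp add: field_simps)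
      hence "real k * e < N" using False by linarith
      thus ?thesis using kpos by (simp add: field_simps)
    qed
    have Nk2: "N / real k \<le> 1/e"
    proof -
      have "N / real k \<le> N" using N0 k2 by (simp add: field_simps)
      thus ?thesis using less.prems(3) by linarith
    qed
    have Nk3: "real (card (B i)) \<ge> (e * (N / real k)) powr d * real (card V)" if "i < k" for i
    proof -
      have "(e * (N / real k)) powr d * real (card V) = (e*N) powr d * real (card V) / real k powr d"
        by (simp add: powr_divide powr_mult)
      also have "\<dots> \<le> real (card F) / real k powr d"
        using less.prems(4) kdpos by (simp add: divide_right_mono)
      finally show ?thesis using Bcard[OF that] by linarith
    qed
    have "\<forall>i<k. \<exists>CC. finite CC \<and> (\<forall>C\<in>CC. C \<subseteq> B i \<and> C \<noteq> {} \<and> real (card C) \<ge> real (card (B i)) * (e/(N / real k)) powr d)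
      \<and> (\<forall>C\<in>CC. \<forall>D\<in>CC. C \<noteq> D \<longrightarrow> C \<inter> D = {}) \<and> real (card CC) \<ge> N / real k \<and> good E (e powr d) CC"
    proof (intro allI impI)
      fix i assume i: "i < k"
      show "\<exists>CC. finite CC \<and> (\<forall>C\<in>CC. C \<subseteq> B i \<and> C \<noteq> {} \<and> real (card C) \<ge> real (card (B i)) * (e/(N / real k)) powr d)
      \<and> (\<forall>C\<in>CC. \<forall>D\<in>CC. C \<noteq> D \<longrightarrow> C \<inter> D = {}) \<and> real (card CC) \<ge> N / real k \<and> good E (e powr d) CC"
        using less.hyps[OF Bless[OF i] _ Nk1 Nk2 Nk3[OF i]] BF[OF i] less.prems(1) by blast
    qed
    then obtain f where f: "\<forall>i<k. finite (f i) \<and> (\<forall>C\<in>f i. C \<subseteq> B i \<and> C \<noteq> {} \<and> real (card C) \<ge> real (card (B i)) * (e/(N / real k)) powr d)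
      \<and> (\<forall>C\<in>f i. \<forall>D\<in>f i. C \<noteq> D \<longrightarrow> C \<inter> D = {}) \<and> real (card (f i)) \<ge> N / real k \<and> good E (e powr d) (f i)"
      by metis
    define CC where "CC = (\<Union>i<k. f i)"
    have sizeC: "real (card C) \<ge> real (card F) * (e/N) powr d" if "i < k" "C \<in> f i" for i C
    proof -
      have "real (card F) * (e/N) powr d = (real (card F) / real k powr d) * (e/(N / real k)) powr d"
        using kdpos by (simp add: powr_divide powr_mult field_simps)
      also have "\<dots> \<le> real (card (B i)) * (e/(N / real k)) powr d"
        using Bcard[OF that(1)] by (intro mult_right_mono) auto
      moreover have "real (card (B i)) * (e/(N / real k)) powr d \<le> real (card C)" using f that by blast
      ultimately show ?thesis by linarith
    qed
    have relC: "e powr (5*d) * real (card (B i)) \<le> e powr d * real (card C)" if "i < k" "C \<in> f i" for i C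
    proof -
      have "e * e \<le> e / (N / real k)" using Nk2 e0 N0 kpos by (simp add: field_simps)
      hence "(e * e) powr d \<le> (e / (N / real k)) powr d" using e0 d1 by (intro powr_mono2) auto
      moreover have "(e*e) powr d = e powr (2*d)" by (simp add: powr_mult powr_add[symmetric])
      moreover have "e powr (5*d) = e powr d * e powr (4*d)" by (simp add: powr_add[symmetric])
      moreover have "e powr (4*d) \<le> e powr (2*d)" using e0 e1 d1 by (intro powr_mono') auto
      ultimately have "e powr (5*d) \<le> e powr d * (e / (N / real k)) powr d"
        by (smt (verit) mult_left_mono powr_ge_zero)
      hence "e powr (5*d) * real (card (B i)) \<le> (e powr d * (e / (N / real k)) powr d) * real (card (B i))"
        by (rule mult_right_mono) simp
      also have "\<dots> = e powr d * ((e / (N / real k)) powr d * real (card (B i)))" by (simp only: mult_ac)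
      also have "\<dots> \<le> e powr d * real (card C)"
      proof (rule mult_left_mono)
        have "real (card (B i)) * (e/(N / real k)) powr d \<le> real (card C)" using f that by blast
        thus "(e / (N / real k)) powr d * real (card (B i)) \<le> real (card C)" by (simp only: mult.commute)
      qed simp
      finally show ?thesis .
    qed
    have fdisj: "f i \<inter> f j = {}" if "i < k" "j < k" "i \<noteq> j" for i j
    proof (rule ccontr)
      assume "f i \<inter> f j \<noteq> {}"
      then obtain C where "C \<in> f i" "C \<in> f j" by auto
      hence "C \<subseteq> B i" "C \<subseteq> B j" "C \<noteq> {}" using f that by auto
      thus False using Bdisj[OF that] by auto
    qed
    have "finite CC" unfolding CC_def using f by auto
    moreover have "\<forall>C\<in>CC. C \<subseteq> F \<and> C \<noteq> {} \<and> real (card C) \<ge> real (card F) * (e/N) powr d"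
    proof
      fix C assume "C \<in> CC"
      then obtain i where i: "i < k" "C \<in> f i" unfolding CC_def by auto
      have "C \<subseteq> B i" "C \<noteq> {}" using f i by auto
      thus "C \<subseteq> F \<and> C \<noteq> {} \<and> real (card C) \<ge> real (card F) * (e/N) powr d"
        using BF[OF i(1)] sizeC[OF i] by auto
    qed
    moreover have "\<forall>C\<in>CC. \<forall>D\<in>CC. C \<noteq> D \<longrightarrow> C \<inter> D = {}"
    proof (intro ballI impI)
      fix C D assume "C \<in> CC" "D \<in> CC" "C \<noteq> D"
      then obtain i j where ij: "i < k" "j < k" "C \<in> f i" "D \<in> f j" unfolding CC_def by auto
      show "C \<inter> D = {}"
      proof (cases "i = j")
        case True thus ?thesis using f ij \<open>C \<noteq> D\<close> by auto
      next
        case False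
        have "C \<subseteq> B i" "D \<subseteq> B j" using f ij by auto
        thus ?thesis using Bdisj[OF ij(1,2) False] by auto
      qed
    qed
    moreover have "real (card CC) \<ge> N"
    proof -
      have "card CC = (\<Sum>i<k. card (f i))" unfolding CC_def
        by (rule card_UN_disjoint) (use f fdisj in auto)
      hence "real (card CC) = (\<Sum>i<k. real (card (f i)))" by simp
      also have "\<dots> \<ge> (\<Sum>i<k. N / real k)" by (rule sum_mono) (use f in auto)
      moreover have "(\<Sum>i<k. N / real k) = N" using kpos by simp
      ultimately show ?thesis by linarith
    qed
    moreover have "good E (e powr d) CC"
      unfolding good_def
    proof (intro ballI impI)
      fix C D assume "C \<in> CC" "D \<in> CC" "C \<noteq> D"
      then obtain i j where ij: "i < k" "j < k" "C \<in> f i" "D \<in> f j" unfolding CC_def by auto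
      show "complete_pair E C D \<or> weakly_sparse E (e powr d) C D"
      proof (cases "i = j")
        case True thus ?thesis using f ij \<open>C \<noteq> D\<close> unfolding good_def by auto
      next
        case False
        have CB: "C \<subseteq> B i" and DB: "D \<subseteq> B j" using f ij by auto
        have finB: "finite (B l)" if "l < k" for l using BF[OF that] finF finite_subset by auto
        show ?thesis
        proof (cases "pure_blockade E B m")
          case True
          hence "complete_pair E (B i) (B j) \<or> anticomplete_pair E (B i) (B j)"
            using ij km False unfolding pure_blockade_def by auto
          thus ?thesis using complete_sub[OF _ CB DB] anticomplete_sub[OF _ CB DB] anti_ws powr_ge_zero by metis
        next
          case nP: False
          hence sb: "sparse_blockade E (e powr (5 * d)) B m" using ps by auto
          show ?thesis
          proof (cases "i < j")
            case True
            hence "sparse_to E (e powr (5 * d)) (B i) (B j)" using sb ij km unfolding sparse_blockade_def by auto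
            from sparse_sub[OF this CB DB finB[OF ij(1)] finB[OF ij(2)] sym relC[OF ij(1,3)]]
            show ?thesis by auto
          next
            case nl: False
            hence "j < i" using False by auto
            hence "sparse_to E (e powr (5 * d)) (B j) (B i)" using sb ij km unfolding sparse_blockade_def by auto
            from sparse_sub[OF this DB CB finB[OF ij(2)] finB[OF ij(1)] sym relC[OF ij(2,4)]]
            show ?thesis by auto
          qed
        qed
      qed
    qed
    ultimately show ?thesis by blast
  qed
qed


lemma escape_pairs:
  assumes sym: "\<forall>u v. E u v \<longrightarrow> E v u" and e0: "0 < e" and e1: "e < 1"
    and fin: "\<forall>i<k. finite (B i)"
    and xle: "x \<le> e powr d"
    and ps: "pure_blockade E B k \<or> sparse_blockade E x B k"
  shows "\<forall>i<k. \<forall>j<k. i \<noteq> j \<longrightarrow> complete_pair E (B i) (B j) \<or> weakly_sparse E (e powr d) (B i) (B j)"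
proof (intro allI impI)
  fix i j assume ij: "i < k" "j < k" "i \<noteq> j"
  show "complete_pair E (B i) (B j) \<or> weakly_sparse E (e powr d) (B i) (B j)"
  proof (cases "pure_blockade E B k")
    case True
    hence "complete_pair E (B i) (B j) \<or> anticomplete_pair E (B i) (B j)"
      using ij unfolding pure_blockade_def by auto
    thus ?thesis using anti_ws powr_ge_zero by metis
  next
    case False
    hence sb: "sparse_blockade E x B k" using ps by auto
    have rel: "x * real (card (B l)) \<le> e powr d * real (card (B l))" for l
      using xle by (rule mult_right_mono) simp
    show ?thesis
    proof (cases "i < j")
      case True
      hence "sparse_to E x (B i) (B j)" using sb ij unfolding sparse_blockade_def by auto
      from sparse_sub[OF this subset_refl subset_refl fin[rule_format, OF ij(1)] fin[rule_format, OF ij(2)] sym rel]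
      show ?thesis by auto
    next
      case False
      hence "j < i" using ij by auto
      hence "sparse_to E x (B j) (B i)" using sb ij unfolding sparse_blockade_def by auto
      from sparse_sub[OF this subset_refl subset_refl fin[rule_format, OF ij(2)] fin[rule_format, OF ij(1)] sym rel]
      show ?thesis by auto
    qed
  qed
qed

theorem theorem6p1:
  fixes V :: "'a set" and E :: "'a \<Rightarrow> 'a \<Rightarrow> bool" and \<epsilon> d :: real
  assumes "simple_graph V E"
    and "0 < \<epsilon>" and "\<epsilon> < 1/2" and "d \<ge> 1"
    and "real (card V) \<ge> \<epsilon> powr (- 10 * d\<^sup>2)"
    and "\<forall>S. S \<subseteq> V \<and> real (card S) \<ge> \<epsilon> powr d * real (card V) \<longrightarrow>
           (\<exists>k::nat. 2 \<le> k \<and> real k \<le> 1 / (\<epsilon> powr (5 * d)) \<and>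
              (\<exists>B m. k \<le> m \<and> blockade S B m
                 \<and> has_width_at_least B m (real (card S) / (real k powr d))
                 \<and> (pure_blockade E B m \<or> sparse_blockade E (\<epsilon> powr (5 * d)) B m)))"
  shows "\<exists>B m. real m \<ge> 1 / \<epsilon> \<and> blockade V B m
           \<and> has_width_at_least B m ((\<epsilon> powr (5 * d)) powr (2 * d) * real (card V))
           \<and> (\<forall>i<m. \<forall>j<m. i \<noteq> j \<longrightarrow>
                complete_pair E (B i) (B j) \<or> weakly_sparse E (\<epsilon> powr d) (B i) (B j))"
    (is "?Goal")
proof -
  note G = assms(1) and e0 = assms(2) and e1 = assms(3) and d1 = assms(4) and Vbig = assms(5)
    and H = assms(6)
  define x where "x = \<epsilon> powr (5 * d)"
  have finV: "finite V" and sym: "\<forall>u v. E u v \<longrightarrow> E v u" using G unfolding simple_graph_def by auto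
  have V0: "card V > 0"
  proof -
    have "\<epsilon> powr (- 10 * d\<^sup>2) > 0" using e0 by simp
    thus ?thesis using Vbig by linarith
  qed
  have x0: "x > 0" unfolding x_def using e0 by simp
  have xe: "x \<le> \<epsilon>"
  proof -
    have "\<epsilon> powr (5*d) \<le> \<epsilon> powr 1" using e0 e1 d1 by (intro powr_mono') auto
    thus ?thesis unfolding x_def using e0 by simp
  qed
  have xed: "x \<le> \<epsilon> powr d"
    unfolding x_def using e0 e1 d1 by (intro powr_mono') auto
  show ?thesis
  proof (cases "\<exists>S. S \<subseteq> V \<and> real (card S) \<ge> \<epsilon> powr d * real (card V) \<and>
           (\<exists>k::nat. real k \<le> 1 / x \<and> real k \<ge> 1 / \<epsilon> \<and>
              (\<exists>B m. k \<le> m \<and> blockade S B m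
                 \<and> has_width_at_least B m (real (card S) / (real k powr d))
                 \<and> (pure_blockade E B m \<or> sparse_blockade E x B m)))")
    case True
    then obtain S k B m where S: "S \<subseteq> V" "real (card S) \<ge> \<epsilon> powr d * real (card V)"
      and k: "real k \<le> 1 / x" "real k \<ge> 1 / \<epsilon>" and km: "k \<le> m" and bl: "blockade S B m"
      and wd: "has_width_at_least B m (real (card S) / (real k powr d))"
      and ps: "pure_blockade E B m \<or> sparse_blockade E x B m" by blast
    have kpos: "real k > 0" using k(2) e0 by (smt (verit) divide_pos_pos)
    have blV: "blockade V B k" using bl km S(1) unfolding blockade_def by (meson order_less_le_trans subset_trans)
    have fin: "\<forall>i<k. finite (B i)" using blV finV unfolding blockade_def by (meson finite_subset)
    have ps': "pure_blockade E B k \<or> sparse_blockade E x B k"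
    proof (cases "pure_blockade E B m")
      case True thus ?thesis using km unfolding pure_blockade_def by auto
    next
      case False thus ?thesis using ps km unfolding sparse_blockade_def by auto
    qed
    have wid: "has_width_at_least B k (x powr (2 * d) * real (card V))"
      unfolding has_width_at_least_def
    proof (intro allI impI)
      fix i assume i: "i < k"
      have c: "real (card (B i)) \<ge> real (card S) / real k powr d"
        using wd i km unfolding has_width_at_least_def by auto
      have "real k powr d \<le> (1/x) powr d" using k(1) kpos d1 by (intro powr_mono2) auto
      hence "real k powr d \<le> 1 / x powr d" by (simp add: powr_divide)
      hence "real k powr d * x powr d \<le> 1" using x0 by (simp add: field_simps)
      hence kk: "x powr d \<le> 1 / real k powr d" using kpos by (simp add: field_simps)
      have "x powr d \<le> \<epsilon> powr d" using x0 xe by (intro powr_mono2) (use d1 in auto)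
      have "x powr (2*d) * real (card V) = x powr d * (x powr d * real (card V))"
        by (simp add: powr_add[symmetric])
      also have "\<dots> \<le> x powr d * (\<epsilon> powr d * real (card V))"
        using \<open>x powr d \<le> \<epsilon> powr d\<close> by (intro mult_left_mono mult_right_mono) auto
      also have "\<dots> \<le> x powr d * real (card S)" using S(2) by (intro mult_left_mono) auto
      also have "\<dots> \<le> (1 / real k powr d) * real (card S)" using kk by (intro mult_right_mono) auto
      also have "\<dots> = real (card S) / real k powr d" by simp
      finally show "real (card (B i)) \<ge> x powr (2 * d) * real (card V)" using c by linarith
    qed
    have "\<forall>i<k. \<forall>j<k. i \<noteq> j \<longrightarrow> complete_pair E (B i) (B j) \<or> weakly_sparse E (\<epsilon> powr d) (B i) (B j)"
      using escape_pairs[OF sym e0 _ fin xed ps'] e1 by auto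
    thus ?thesis using k(2) blV wid unfolding x_def by blast
  next
    case False
    have H': "\<forall>S. S \<subseteq> V \<and> real (card S) \<ge> \<epsilon> powr d * real (card V) \<longrightarrow>
           (\<exists>k::nat. 2 \<le> k \<and> real k < 1 / \<epsilon> \<and>
              (\<exists>B m. k \<le> m \<and> blockade S B m
                 \<and> has_width_at_least B m (real (card S) / (real k powr d))
                 \<and> (pure_blockade E B m \<or> sparse_blockade E (\<epsilon> powr (5 * d)) B m)))"
    proof (intro allI impI)
      fix S assume S: "S \<subseteq> V \<and> real (card S) \<ge> \<epsilon> powr d * real (card V)"
      then obtain k :: nat and B m where "2 \<le> k" "real k \<le> 1 / x" "k \<le> m" "blockade S B m"
        "has_width_at_least B m (real (card S) / (real k powr d))"
        "pure_blockade E B m \<or> sparse_blockade E x B m"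
        using H unfolding x_def by blast
      moreover have "\<not> real k \<ge> 1 / \<epsilon>" using False S calculation by blast
      ultimately show "\<exists>k::nat. 2 \<le> k \<and> real k < 1 / \<epsilon> \<and>
              (\<exists>B m. k \<le> m \<and> blockade S B m
                 \<and> has_width_at_least B m (real (card S) / (real k powr d))
                 \<and> (pure_blockade E B m \<or> sparse_blockade E (\<epsilon> powr (5 * d)) B m))"
        unfolding x_def by (intro exI[of _ k]) auto
    qed
    have N1: "\<epsilon> < 1 / \<epsilon>" 
    proof -
      have "1 / \<epsilon> > 2" using e0 e1 by (simp add: field_simps)
      thus ?thesis using e1 by linarith
    qed
    have N3: "real (card V) \<ge> (\<epsilon> * (1/\<epsilon>)) powr d * real (card V)" using e0 by simp
    obtain CC where fCC: "finite CC"
      and CCp: "\<forall>C\<in>CC. C \<subseteq> V \<and> C \<noteq> {} \<and> real (card C) \<ge> real (card V) * (\<epsilon>/(1/\<epsilon>)) powr d"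
      and CCd: "\<forall>C\<in>CC. \<forall>D\<in>CC. C \<noteq> D \<longrightarrow> C \<inter> D = {}" and CCc: "real (card CC) \<ge> 1/\<epsilon>"
      and CCg: "good E (\<epsilon> powr d) CC"
      using tree[OF G e0 e1 d1 V0 H' subset_refl N1 order_refl N3] by blast
    obtain h where h: "bij_betw h {0..<card CC} CC" using ex_bij_betw_nat_finite[OF fCC] by blast
    have hin: "h i \<in> CC" if "i < card CC" for i using h that unfolding bij_betw_def by auto
    have hinj: "h i \<noteq> h j" if "i < card CC" "j < card CC" "i \<noteq> j" for i j
      using h that unfolding bij_betw_def inj_on_def by auto
    have "blockade V h (card CC)" unfolding blockade_def
      using hin hinj CCp CCd by blast
    moreover have "has_width_at_least h (card CC) (x powr (2 * d) * real (card V))"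
      unfolding has_width_at_least_def
    proof (intro allI impI)
      fix i assume i: "i < card CC"
      have "(\<epsilon>/(1/\<epsilon>)) powr d = \<epsilon> powr (2*d)" by (simp add: powr_mult powr_add[symmetric] power2_eq_square)
      moreover have "x powr (2*d) = \<epsilon> powr (5*d*(2*d))" unfolding x_def by (simp add: powr_powr)
      moreover have "\<epsilon> powr (5*d*(2*d)) \<le> \<epsilon> powr (2*d)"
      proof -
        have "d * 1 \<le> d * d" using d1 by (intro mult_left_mono) auto
        hence "2*d \<le> 5*d*(2*d)" using d1 by (simp add: algebra_simps)
        thus ?thesis using e0 e1 by (intro powr_mono') auto
      qed
      ultimately have "x powr (2*d) \<le> (\<epsilon>/(1/\<epsilon>)) powr d" by simp
      hence "x powr (2*d) * real (card V) \<le> (\<epsilon>/(1/\<epsilon>)) powr d * real (card V)"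
        by (rule mult_right_mono) simp
      moreover have "(\<epsilon>/(1/\<epsilon>)) powr d * real (card V) = real (card V) * (\<epsilon>/(1/\<epsilon>)) powr d"
        by (rule mult.commute)
      moreover have "real (card (h i)) \<ge> real (card V) * (\<epsilon>/(1/\<epsilon>)) powr d"
        using CCp hin[OF i] by blast
      ultimately show "real (card (h i)) \<ge> x powr (2 * d) * real (card V)" by linarith
    qed
    moreover have "\<forall>i<card CC. \<forall>j<card CC. i \<noteq> j \<longrightarrow>
                complete_pair E (h i) (h j) \<or> weakly_sparse E (\<epsilon> powr d) (h i) (h j)"
    proof (intro allI impI)
      fix i j assume ij: "i < card CC" "j < card CC" "i \<noteq> j"
      show "complete_pair E (h i) (h j) \<or> weakly_sparse E (\<epsilon> powr d) (h i) (h j)"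
        using CCg hin[OF ij(1)] hin[OF ij(2)] hinj[OF ij] unfolding good_def by simp
    qed
    ultimately have "real (card CC) \<ge> 1 / \<epsilon> \<and> blockade V h (card CC)
           \<and> has_width_at_least h (card CC) ((\<epsilon> powr (5 * d)) powr (2 * d) * real (card V))
           \<and> (\<forall>i<card CC. \<forall>j<card CC. i \<noteq> j \<longrightarrow>
                complete_pair E (h i) (h j) \<or> weakly_sparse E (\<epsilon> powr d) (h i) (h j))"
      using CCc unfolding x_def by simp
    thus ?thesis by blast
  qed
qed

end
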